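(* In any finite ELP, let $\pi$ be a policy, $\rho_\pi$ its stationary distribution, and define $\lambda_\pi(s,a)=\rho_\pi(s)\pi(a|s)\mathbb E_\pi[T]$. Then for every $Q\in\mathcal Q$, $$\mathcal L_\pi(Q,\lambda_\pi)=J(\pi)+\sum_{s\notin\mathcal S_\bot}\sum_{a\in\mathcal A}\lambda_\pi(s,a)\Big(\max_{\bar a}Q(s,\bar a)-Q(s,a)\Big).$$
   Context: A finite ELP is $(\mathcal S,\mathcal A,P,R,\rho)$ with finite $\mathcal S,\mathcal A$, reward $R:\mathcal S\to\mathbb R$, transitions $P(s'|s,a)$, distribution $\rho$, and nonempty terminal set $\mathcal S_\bot$. Under a policy $\pi$, $S_0$ is a fixed terminal state, $A_t\sim\pi(\cdot|S_t)$, $S_{t+1}\sim P(\cdot|S_t,A_t)$, and $T=\inf\{t\ge1:S_t\in\mathcal S_\bot\}$. ELP conditions: $\mathbb E_\pi[T]<\infty$ for every $\pi$; $P(s'|s,a)=\rho(s')$ for all $s\in\mathcal S_\bot$, all $a,s'$; every state is reachable under some policy. $J(\pi)=\mathbb E_\pi[\sum_{t=1}^TR(S_t)]$. $\mathcal Q$ = all functions $\mathcal S\times\mathcal A\to\mathbb R$. $\mathcal BQ(s,a)=\sum_{s'}P(s'|s,a)\big(R(s')+\mathbf 1[s'\notin\mathcal S_\bot]\max_{a'}Q(s',a')\big)$. $\mathcal L_\pi(Q,\lambda)=\mathbb E_\pi[Q(S_T,A_T)]+\sum_{s,a}\lambda(s,a)(\mathcal BQ(s,a)-Q(s,a))$ with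 $A_T\sim\pi(\cdot|S_T)$. In a finite ELP, the Markov chain on $\mathcal S$ with kernel $\sum_aP(s'|s,a)\pi(a|s)$ has a unique stationary distribution, denoted $\rho_\pi$. *)

theory Defs
  imports Complex_Main "HOL-Library.Extended_Nonnegative_Real"
begin

text \<open>Finite state space = finite type 's, finite action space = finite type 'a.
  Transition kernel: P s a s' = P(s'|s,a). Policy: pol s a = pol(a|s).\<close>

definition is_dist :: "('s::finite \<Rightarrow> real) \<Rightarrow> bool" where
  "is_dist d \<longleftrightarrow> (\<forall>s. 0 \<le> d s) \<and> sum d UNIV = 1"

definition is_policy :: "('s::finite \<Rightarrow> 'a::finite \<Rightarrow> real) \<Rightarrow> bool" where
  "is_policy pol \<longleftrightarrow> (\<forall>s. is_dist (pol s))"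

text \<open>Probability weight of the continuation (S_1,A_1),...,(S_n,A_n) given (S_0,A_0)=(s,a).\<close>
fun traj_weight :: "('s \<Rightarrow> 'a \<Rightarrow> 's \<Rightarrow> real) \<Rightarrow> ('s \<Rightarrow> 'a \<Rightarrow> real) \<Rightarrow> 's \<Rightarrow> 'a
    \<Rightarrow> ('s \<times> 'a) list \<Rightarrow> real" where
  "traj_weight P pol s a [] = 1"
| "traj_weight P pol s a ((s', a') # xs) = P s a s' * pol s' a' * traj_weight P pol s' a' xs"

text \<open>Probability that ((S_1,A_1),...,(S_n,A_n)) = xs, where S_0 = s0 and A_0 ~ pol(.|s0).\<close>
definition traj_prob :: "('s \<Rightarrow> 'a::finite \<Rightarrow> 's \<Rightarrow> real) \<Rightarrow> ('s \<Rightarrow> 'a \<Rightarrow> real) \<Rightarrow> 's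
    \<Rightarrow> ('s \<times> 'a) list \<Rightarrow> real" where
  "traj_prob P pol s0 xs = (\<Sum>a0\<in>UNIV. pol s0 a0 * traj_weight P pol s0 a0 xs)"

text \<open>The prefix xs = ((S_1,A_1),...,(S_n,A_n)) is such that T = n = length xs.\<close>
definition hits_at :: "'s set \<Rightarrow> ('s \<times> 'a) list \<Rightarrow> bool" where
  "hits_at Sbot xs \<longleftrightarrow> xs \<noteq> [] \<and> fst (last xs) \<in> Sbot
      \<and> (\<forall>i < length xs - 1. fst (xs ! i) \<notin> Sbot)"

definition term_paths :: "'s set \<Rightarrow> nat \<Rightarrow> ('s \<times> 'a) list set" where
  "term_paths Sbot n = {xs. length xs = n \<and> hits_at Sbot xs}"

definition prob_T :: "('s::finite \<Rightarrow> 'a::finite \<Rightarrow> 's \<Rightarrow> real) \<Rightarrow> ('s \<Rightarrow> 'a \<Rightarrow> real) \<Rightarrow> 's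
    \<Rightarrow> 's set \<Rightarrow> nat \<Rightarrow> real" where
  "prob_T P pol s0 Sbot n = (\<Sum>xs\<in>term_paths Sbot n. traj_prob P pol s0 xs)"

text \<open>E_pi[T] in [0,\<infinity>]: sum of n Pr(T=n), plus \<infinity> times Pr(T = \<infinity>).\<close>
definition expected_T :: "('s::finite \<Rightarrow> 'a::finite \<Rightarrow> 's \<Rightarrow> real) \<Rightarrow> ('s \<Rightarrow> 'a \<Rightarrow> real) \<Rightarrow> 's
    \<Rightarrow> 's set \<Rightarrow> ennreal" where
  "expected_T P pol s0 Sbot =
     (\<Sum>n. ennreal (real n * prob_T P pol s0 Sbot n))
     + \<infinity> * (1 - (\<Sum>n. ennreal (prob_T P pol s0 Sbot n)))"

text \<open>E_pi[f(S_1,A_1,...,S_T,A_T)] (the event T = \<infinity> has probability zero in an ELP).\<close>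
definition expect_T :: "('s::finite \<Rightarrow> 'a::finite \<Rightarrow> 's \<Rightarrow> real) \<Rightarrow> ('s \<Rightarrow> 'a \<Rightarrow> real) \<Rightarrow> 's
    \<Rightarrow> 's set \<Rightarrow> (('s \<times> 'a) list \<Rightarrow> real) \<Rightarrow> real" where
  "expect_T P pol s0 Sbot f =
     (\<Sum>n. \<Sum>xs\<in>term_paths Sbot n. traj_prob P pol s0 xs * f xs)"

definition J :: "('s::finite \<Rightarrow> 'a::finite \<Rightarrow> 's \<Rightarrow> real) \<Rightarrow> ('s \<Rightarrow> real) \<Rightarrow> ('s \<Rightarrow> 'a \<Rightarrow> real)
    \<Rightarrow> 's \<Rightarrow> 's set \<Rightarrow> real" where
  "J P R pol s0 Sbot = expect_T P pol s0 Sbot (\<lambda>xs. \<Sum>i<length xs. R (fst (xs ! i)))"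

text \<open>Finite episodic learning problem (ELP); S_0 = s0 is the fixed terminal start state.\<close>
definition finite_ELP :: "('s::finite \<Rightarrow> 'a::finite \<Rightarrow> 's \<Rightarrow> real) \<Rightarrow> ('s \<Rightarrow> real) \<Rightarrow> 's set
    \<Rightarrow> 's \<Rightarrow> bool" where
  "finite_ELP P \<rho> Sbot s0 \<longleftrightarrow>
     (\<forall>s a. is_dist (P s a)) \<and> is_dist \<rho> \<and> Sbot \<noteq> {} \<and> s0 \<in> Sbot
     \<and> (\<forall>pol. is_policy pol \<longrightarrow> expected_T P pol s0 Sbot < \<infinity>)
     \<and> (\<forall>s\<in>Sbot. \<forall>a s'. P s a s' = \<rho> s')
     \<and> (\<forall>s. \<exists>pol. is_policy pol \<and>
          (s = s0 \<or> (\<exists>xs. xs \<noteq> [] \<and> fst (last xs) = s \<and> traj_prob P pol s0 xs > 0)))"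

definition is_stationary :: "('s::finite \<Rightarrow> 'a::finite \<Rightarrow> 's \<Rightarrow> real) \<Rightarrow> ('s \<Rightarrow> 'a \<Rightarrow> real)
    \<Rightarrow> ('s \<Rightarrow> real) \<Rightarrow> bool" where
  "is_stationary P pol d \<longleftrightarrow> is_dist d \<and>
     (\<forall>s'. d s' = (\<Sum>s\<in>UNIV. d s * (\<Sum>a\<in>UNIV. P s a s' * pol s a)))"

definition bellman :: "('s::finite \<Rightarrow> 'a::finite \<Rightarrow> 's \<Rightarrow> real) \<Rightarrow> ('s \<Rightarrow> real) \<Rightarrow> 's set
    \<Rightarrow> ('s \<Rightarrow> 'a \<Rightarrow> real) \<Rightarrow> 's \<Rightarrow> 'a \<Rightarrow> real" where
  "bellman P R Sbot Q s a =
     (\<Sum>s'\<in>UNIV. P s a s' * (R s' + (if s' \<notin> Sbot then Max (range (Q s')) else 0)))"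

definition lagrangian :: "('s::finite \<Rightarrow> 'a::finite \<Rightarrow> 's \<Rightarrow> real) \<Rightarrow> ('s \<Rightarrow> real)
    \<Rightarrow> ('s \<Rightarrow> 'a \<Rightarrow> real) \<Rightarrow> 's \<Rightarrow> 's set \<Rightarrow> ('s \<Rightarrow> 'a \<Rightarrow> real) \<Rightarrow> ('s \<Rightarrow> 'a \<Rightarrow> real) \<Rightarrow> real" where
  "lagrangian P R pol s0 Sbot Q lam =
     expect_T P pol s0 Sbot (\<lambda>xs. Q (fst (last xs)) (snd (last xs)))
     + (\<Sum>s\<in>UNIV. \<Sum>a\<in>UNIV. lam s a * (bellman P R Sbot Q s a - Q s a))"

definition lambda_pi :: "('s::finite \<Rightarrow> 'a::finite \<Rightarrow> 's \<Rightarrow> real) \<Rightarrow> ('s \<Rightarrow> 'a \<Rightarrow> real)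
    \<Rightarrow> ('s \<Rightarrow> real) \<Rightarrow> 's \<Rightarrow> 's set \<Rightarrow> 's \<Rightarrow> 'a \<Rightarrow> real" where
  "lambda_pi P pol d s0 Sbot s a = d s * pol s a * enn2real (expected_T P pol s0 Sbot)"

end

theory Submission
  imports Defs
begin


definition alive :: "'s set \<Rightarrow> nat \<Rightarrow> ('s \<times> 'a) list set" where
  "alive Sbot n = {xs. length xs = n \<and> (\<forall>i<n. fst (xs ! i) \<notin> Sbot)}"

definition beta :: "('s \<Rightarrow> 'a::finite \<Rightarrow> 's \<Rightarrow> real) \<Rightarrow> ('s \<Rightarrow> 'a \<Rightarrow> real) \<Rightarrow> 's
    \<Rightarrow> ('s \<times> 'a) list \<Rightarrow> 's \<Rightarrow> real" where
  "beta P pol s0 ys s' = (\<Sum>a0\<in>UNIV. pol s0 a0 * traj_weight P pol s0 a0 ys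
      * P (fst (last ((s0,a0)#ys))) (snd (last ((s0,a0)#ys))) s')"

lemma tw_snoc:
  "traj_weight P pol s a (ys @ [(s',a')]) =
     traj_weight P pol s a ys * P (fst (last ((s,a)#ys))) (snd (last ((s,a)#ys))) s' * pol s' a'"
  by (induction ys arbitrary: s a) (auto simp: algebra_simps)

lemma tp_snoc:
  "traj_prob P pol s0 (ys @ [(s',a')]) = beta P pol s0 ys s' * pol s' a'"
  unfolding traj_prob_def beta_def tw_snoc sum_distrib_right by (simp add: algebra_simps)

lemma beta_snoc:
  "beta P pol s0 (ys @ [(s,a)]) s' = beta P pol s0 ys s * pol s a * P s a s'"
  unfolding beta_def tw_snoc sum_distrib_right by (simp add: algebra_simps)

lemma beta_sum:
  assumes "\<And>s a. sum (P s a) UNIV = 1"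
  shows "(\<Sum>s'\<in>UNIV. beta P pol s0 ys s') = traj_prob P pol s0 ys"
proof -
  have "(\<Sum>s'\<in>UNIV. beta P pol s0 ys s') = (\<Sum>a0\<in>UNIV. pol s0 a0 * traj_weight P pol s0 a0 ys
      * (\<Sum>s'\<in>UNIV. P (fst (last ((s0,a0)#ys))) (snd (last ((s0,a0)#ys))) s'))"
    unfolding beta_def by (subst sum.swap) (simp add: sum_distrib_left)
  also have "\<dots> = traj_prob P pol s0 ys" by (simp add: assms traj_prob_def)
  finally show ?thesis .
qed

lemma alive_0: "alive Sbot 0 = {[]}" by (auto simp: alive_def)

lemma snoc_inj: "inj (\<lambda>(ys, x). ys @ [x])" by (auto simp: inj_def)

lemma alive_Suc:
  "alive Sbot (Suc n) = (\<lambda>(ys, x). ys @ [x]) ` (alive Sbot n \<times> {x. fst x \<notin> Sbot})"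
proof (intro set_eqI iffI)
  fix xs assume "xs \<in> alive Sbot (Suc n)"
  hence l: "length xs = Suc n" and h: "\<forall>i<Suc n. fst (xs ! i) \<notin> Sbot" by (auto simp: alive_def)
  then obtain ys x where xs: "xs = ys @ [x]" by (metis length_Suc_conv_rev)
  have ly: "length ys = n" using l xs by simp
  have "\<forall>i<n. fst (ys ! i) \<notin> Sbot"
  proof (intro allI impI)
    fix i assume "i < n"
    thus "fst (ys ! i) \<notin> Sbot" using h[rule_format, of i] xs ly by (simp add: nth_append)
  qed
  moreover have "fst x \<notin> Sbot" using h[rule_format, of "length ys"] xs l by simp
  ultimately have "ys \<in> alive Sbot n" "fst x \<notin> Sbot" using ly by (auto simp: alive_def)
  thus "xs \<in> (\<lambda>(ys, x). ys @ [x]) ` (alive Sbot n \<times> {x. fst x \<notin> Sbot})" using xs by force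
next
  fix xs assume "xs \<in> (\<lambda>(ys, x). ys @ [x]) ` (alive Sbot n \<times> {x. fst x \<notin> Sbot})"
  thus "xs \<in> alive Sbot (Suc n)"
    by (auto simp: alive_def nth_append less_Suc_eq)
qed

lemma term_0: "term_paths Sbot 0 = {}" by (auto simp: term_paths_def hits_at_def)

lemma term_Suc:
  "term_paths Sbot (Suc n) = (\<lambda>(ys, x). ys @ [x]) ` (alive Sbot n \<times> {x. fst x \<in> Sbot})"
proof (intro set_eqI iffI)
  fix xs assume "xs \<in> term_paths Sbot (Suc n)"
  hence l: "length xs = Suc n" and h: "\<forall>i<n. fst (xs ! i) \<notin> Sbot" and lst: "fst (last xs) \<in> Sbot"
    by (auto simp: term_paths_def hits_at_def)
  then obtain ys x where xs: "xs = ys @ [x]" by (metis length_Suc_conv_rev)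
  with l h lst have "ys \<in> alive Sbot n" "fst x \<in> Sbot"
    by (auto simp: alive_def nth_append)
  thus "xs \<in> (\<lambda>(ys, x). ys @ [x]) ` (alive Sbot n \<times> {x. fst x \<in> Sbot})" using xs by force
next
  fix xs assume "xs \<in> (\<lambda>(ys, x). ys @ [x]) ` (alive Sbot n \<times> {x. fst x \<in> Sbot})"
  thus "xs \<in> term_paths Sbot (Suc n)"
    by (auto simp: alive_def term_paths_def hits_at_def nth_append)
qed

lemma finite_alive: "finite (alive Sbot n :: ('s::finite \<times> 'a::finite) list set)"
  by (rule finite_subset[OF _ finite_lists_length_eq[OF finite_UNIV, of n]]) (auto simp: alive_def)

lemma sum_alive_Suc:
  fixes f :: "('s::finite \<times> 'a::finite) list \<Rightarrow> real"
  shows "sum f (alive Sbot (Suc n)) = (\<Sum>ys\<in>alive Sbot n. \<Sum>s\<in>-Sbot. \<Sum>a\<in>UNIV. f (ys @ [(s,a)]))"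
proof -
  have "sum f (alive Sbot (Suc n)) = (\<Sum>(ys,x)\<in>alive Sbot n \<times> {x. fst x \<notin> Sbot}. f (ys @ [x]))"
    unfolding alive_Suc by (subst sum.reindex) (auto intro: inj_on_subset[OF snoc_inj] simp: case_prod_beta)
  also have "\<dots> = (\<Sum>ys\<in>alive Sbot n. \<Sum>x\<in>{x. fst x \<notin> Sbot}. f (ys @ [x]))"
    by (subst sum.cartesian_product) simp
  also have "{x::'s\<times>'a. fst x \<notin> Sbot} = (-Sbot) \<times> UNIV" by auto
  finally show ?thesis by (simp add: sum.cartesian_product)
qed

lemma sum_term_Suc:
  fixes f :: "('s::finite \<times> 'a::finite) list \<Rightarrow> real"
  shows "sum f (term_paths Sbot (Suc n)) = (\<Sum>ys\<in>alive Sbot n. \<Sum>s\<in>Sbot. \<Sum>a\<in>UNIV. f (ys @ [(s,a)]))"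
proof -
  have "sum f (term_paths Sbot (Suc n)) = (\<Sum>(ys,x)\<in>alive Sbot n \<times> {x. fst x \<in> Sbot}. f (ys @ [x]))"
    unfolding term_Suc by (subst sum.reindex) (auto intro: inj_on_subset[OF snoc_inj] simp: case_prod_beta)
  also have "\<dots> = (\<Sum>ys\<in>alive Sbot n. \<Sum>x\<in>{x. fst x \<in> Sbot}. f (ys @ [x]))"
    by (subst sum.cartesian_product) simp
  also have "{x::'s\<times>'a. fst x \<in> Sbot} = Sbot \<times> UNIV" by auto
  finally show ?thesis by (simp add: sum.cartesian_product)
qed



lemma sum_split_UNIV: "(\<Sum>x\<in>UNIV. f x) = (\<Sum>x\<in>A. f x) + (\<Sum>x\<in>-A. f x)"
  for f :: "'x::finite \<Rightarrow> real"
proof -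
  have "UNIV = A \<union> -A" by auto
  thus ?thesis using sum.union_disjoint[of A "-A" f] by (metis Compl_disjoint finite finite_class.finite_UNIV)
qed

definition Kp :: "('s \<Rightarrow> 'a::finite \<Rightarrow> 's \<Rightarrow> real) \<Rightarrow> ('s \<Rightarrow> 'a \<Rightarrow> real) \<Rightarrow> 's \<Rightarrow> 's \<Rightarrow> real" where
  "Kp P pol s s' = (\<Sum>a\<in>UNIV. P s a s' * pol s a)"

fun mm :: "('s::finite \<Rightarrow> 'a::finite \<Rightarrow> 's \<Rightarrow> real) \<Rightarrow> ('s \<Rightarrow> 'a \<Rightarrow> real) \<Rightarrow> ('s \<Rightarrow> real) \<Rightarrow> 's set
    \<Rightarrow> nat \<Rightarrow> 's \<Rightarrow> real" where
  "mm P pol \<rho> Sbot 0 s = \<rho> s"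
| "mm P pol \<rho> Sbot (Suc n) s' = (\<Sum>s\<in>-Sbot. mm P pol \<rho> Sbot n s * Kp P pol s s')"

definition Rs :: "('s \<Rightarrow> real) \<Rightarrow> ('s \<times> 'a) list \<Rightarrow> real" where
  "Rs R xs = (\<Sum>i<length xs. R (fst (xs ! i)))"

lemma Rs_snoc: "Rs R (ys @ [(s,a)]) = Rs R ys + R s"
  by (simp add: Rs_def nth_append)

lemma Rs_Nil: "Rs R [] = 0" by (simp add: Rs_def)

lemma Rs_bound: "\<bar>Rs R xs\<bar> \<le> real (length xs) * (\<Sum>s\<in>UNIV. \<bar>R s\<bar>)"
  for R :: "'s::finite \<Rightarrow> real"
proof -
  have "\<bar>Rs R xs\<bar> \<le> (\<Sum>i<length xs. \<bar>R (fst (xs ! i))\<bar>)" unfolding Rs_def by (rule sum_abs)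
  also have "\<dots> \<le> (\<Sum>i<length xs. (\<Sum>s\<in>UNIV. \<bar>R s\<bar>))"
    by (intro sum_mono member_le_sum) auto
  finally show ?thesis by simp
qed

locale elp =
  fixes P :: "'s::finite \<Rightarrow> 'a::finite \<Rightarrow> 's \<Rightarrow> real" and \<rho> :: "'s \<Rightarrow> real"
    and Sbot :: "'s set" and s0 :: 's
  assumes elp: "finite_ELP P \<rho> Sbot s0"
begin

lemma P_nonneg: "0 \<le> P s a s'" using elp by (auto simp: finite_ELP_def is_dist_def)
lemma P_sum: "sum (P s a) UNIV = 1" using elp by (auto simp: finite_ELP_def is_dist_def)
lemma rho_nonneg: "0 \<le> \<rho> s" using elp by (auto simp: finite_ELP_def is_dist_def)
lemma rho_sum: "sum \<rho> UNIV = 1" using elp by (auto simp: finite_ELP_def is_dist_def)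
lemma s0_bot: "s0 \<in> Sbot" using elp by (auto simp: finite_ELP_def)
lemma P_bot: "s \<in> Sbot \<Longrightarrow> P s a s' = \<rho> s'" using elp by (auto simp: finite_ELP_def)
lemma ET_fin: "is_policy pol \<Longrightarrow> expected_T P pol s0 Sbot < \<infinity>" using elp by (auto simp: finite_ELP_def)

end

locale elp_pol = elp P \<rho> Sbot s0 for P :: "'s::finite \<Rightarrow> 'a::finite \<Rightarrow> 's \<Rightarrow> real" and \<rho> Sbot s0 +
  fixes pol :: "'s \<Rightarrow> 'a \<Rightarrow> real"
  assumes pol: "is_policy pol"
begin

lemma pol_nonneg: "0 \<le> pol s a" using pol by (auto simp: is_policy_def is_dist_def)
lemma pol_sum: "sum (pol s) UNIV = 1" using pol by (auto simp: is_policy_def is_dist_def)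

lemma Kp_nonneg: "0 \<le> Kp P pol s s'" unfolding Kp_def by (intro sum_nonneg mult_nonneg_nonneg P_nonneg pol_nonneg)

lemma Kp_sum: "(\<Sum>s'\<in>UNIV. Kp P pol s s') = 1"
  unfolding Kp_def by (subst sum.swap) (simp add: sum_distrib_right[symmetric] P_sum pol_sum)

lemma Kp_bot: "s \<in> Sbot \<Longrightarrow> Kp P pol s s' = \<rho> s'"
  unfolding Kp_def by (simp add: P_bot sum_distrib_left[symmetric] pol_sum)

abbreviation "m \<equiv> mm P pol \<rho> Sbot"
abbreviation "tp \<equiv> traj_prob P pol s0"

lemma m_nonneg: "0 \<le> m n s"
  by (induction n arbitrary: s) (auto intro!: sum_nonneg mult_nonneg_nonneg rho_nonneg Kp_nonneg)

lemma tw_nonneg: "0 \<le> traj_weight P pol s a xs"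
  by (induction xs arbitrary: s a) (auto intro!: mult_nonneg_nonneg P_nonneg pol_nonneg)

lemma tp_nonneg: "0 \<le> tp xs"
  unfolding traj_prob_def by (intro sum_nonneg mult_nonneg_nonneg pol_nonneg tw_nonneg)

lemma pol_mult: "(\<Sum>a\<in>UNIV. x * pol s a * y) = x * y"
  by (simp add: sum_distrib_right[symmetric] sum_distrib_left[symmetric] pol_sum)

lemma tp_Nil: "tp [] = 1" by (simp add: traj_prob_def pol_sum)

lemma beta_Nil: "beta P pol s0 [] s = \<rho> s"
  by (simp add: beta_def P_bot[OF s0_bot] sum_distrib_right[symmetric] pol_sum)

lemma m_link: "(\<Sum>ys\<in>alive Sbot n. beta P pol s0 ys s) = m n s"
proof (induction n arbitrary: s)
  case 0 thus ?case by (simp add: alive_0 beta_Nil)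
next
  case (Suc n)
  have "(\<Sum>ys\<in>alive Sbot (Suc n). beta P pol s0 ys s)
      = (\<Sum>ys\<in>alive Sbot n. \<Sum>s'\<in>-Sbot. beta P pol s0 ys s' * Kp P pol s' s)"
    unfolding sum_alive_Suc beta_snoc Kp_def by (simp add: sum_distrib_left algebra_simps)
  also have "\<dots> = (\<Sum>s'\<in>-Sbot. (\<Sum>ys\<in>alive Sbot n. beta P pol s0 ys s') * Kp P pol s' s)"
    by (subst sum.swap) (simp add: sum_distrib_right)
  finally show ?case using Suc by simp
qed

definition aa :: "nat \<Rightarrow> real" where "aa n = (\<Sum>ys\<in>alive Sbot n. tp ys)"

lemma aa_eq: "aa n = (\<Sum>s\<in>UNIV. m n s)"
proof -
  have "aa n = (\<Sum>ys\<in>alive Sbot n. \<Sum>s\<in>UNIV. beta P pol s0 ys s)"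
    unfolding aa_def by (simp add: beta_sum P_sum)
  also have "\<dots> = (\<Sum>s\<in>UNIV. m n s)" by (subst sum.swap) (simp add: m_link)
  finally show ?thesis .
qed

lemma aa_0: "aa 0 = 1" by (simp add: aa_def alive_0 tp_Nil)

lemma aa_nonneg: "0 \<le> aa n" unfolding aa_eq by (intro sum_nonneg m_nonneg)

lemma aa_Suc: "aa (Suc n) = (\<Sum>s\<in>-Sbot. m n s)"
proof -
  have "aa (Suc n) = (\<Sum>ys\<in>alive Sbot n. \<Sum>s\<in>-Sbot. beta P pol s0 ys s)"
    unfolding aa_def sum_alive_Suc tp_snoc by (simp add: sum_distrib_left[symmetric] pol_sum)
  also have "\<dots> = (\<Sum>s\<in>-Sbot. m n s)" by (subst sum.swap) (simp add: m_link)
  finally show ?thesis .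
qed

abbreviation "p \<equiv> prob_T P pol s0 Sbot"

lemma p_0: "p 0 = 0" by (simp add: prob_T_def term_0)

lemma p_Suc: "p (Suc n) = (\<Sum>s\<in>Sbot. m n s)"
proof -
  have "p (Suc n) = (\<Sum>ys\<in>alive Sbot n. \<Sum>s\<in>Sbot. beta P pol s0 ys s)"
    unfolding prob_T_def sum_term_Suc tp_snoc by (simp add: sum_distrib_left[symmetric] pol_sum)
  also have "\<dots> = (\<Sum>s\<in>Sbot. m n s)" by (subst sum.swap) (simp add: m_link)
  finally show ?thesis .
qed

lemma p_nonneg: "0 \<le> p n"
  by (cases n) (auto simp: p_0 p_Suc intro!: sum_nonneg m_nonneg)

lemma aa_rec: "aa n = p (Suc n) + aa (Suc n)"
  unfolding aa_eq[of n] p_Suc aa_Suc by (rule sum_split_UNIV)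

lemma Q_term: "(\<Sum>xs\<in>term_paths Sbot (Suc n). tp xs * Q (fst (last xs)) (snd (last xs)))
    = (\<Sum>s\<in>Sbot. m n s * (\<Sum>a\<in>UNIV. pol s a * Q s a))"
proof -
  have "(\<Sum>xs\<in>term_paths Sbot (Suc n). tp xs * Q (fst (last xs)) (snd (last xs)))
     = (\<Sum>ys\<in>alive Sbot n. \<Sum>s\<in>Sbot. beta P pol s0 ys s * (\<Sum>a\<in>UNIV. pol s a * Q s a))"
    unfolding sum_term_Suc tp_snoc by (simp add: sum_distrib_left algebra_simps)
  also have "\<dots> = (\<Sum>s\<in>Sbot. m n s * (\<Sum>a\<in>UNIV. pol s a * Q s a))"
    by (subst sum.swap) (simp add: m_link[symmetric] sum_distrib_right)
  finally show ?thesis .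
qed

definition Gt :: "('s \<Rightarrow> real) \<Rightarrow> nat \<Rightarrow> real" where
  "Gt R n = (\<Sum>ys\<in>alive Sbot n. tp ys * Rs R ys)"

definition Jt :: "('s \<Rightarrow> real) \<Rightarrow> nat \<Rightarrow> real" where
  "Jt R n = (\<Sum>xs\<in>term_paths Sbot n. tp xs * Rs R xs)"

lemma J_term: "Jt R (Suc n) = Gt R n - Gt R (Suc n) + (\<Sum>s\<in>UNIV. m n s * R s)"
proof -
  have "Jt R (Suc n) + Gt R (Suc n) =
     (\<Sum>ys\<in>alive Sbot n. \<Sum>s\<in>UNIV. beta P pol s0 ys s * (Rs R ys + R s))"
    unfolding Jt_def Gt_def sum_term_Suc sum_alive_Suc tp_snoc Rs_snoc pol_mult
    by (simp add: sum.distrib[symmetric] sum_split_UNIV[symmetric])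
  also have "\<dots> = (\<Sum>ys\<in>alive Sbot n. tp ys * Rs R ys) + (\<Sum>ys\<in>alive Sbot n. \<Sum>s\<in>UNIV. beta P pol s0 ys s * R s)"
  proof -
    have "\<And>ys. (\<Sum>s\<in>UNIV. beta P pol s0 ys s * Rs R ys) = tp ys * Rs R ys"
      by (simp add: sum_distrib_right[symmetric] beta_sum P_sum)
    thus ?thesis by (simp add: distrib_left sum.distrib)
  qed
  also have "(\<Sum>ys\<in>alive Sbot n. \<Sum>s\<in>UNIV. beta P pol s0 ys s * R s) = (\<Sum>s\<in>UNIV. m n s * R s)"
    by (subst sum.swap) (simp add: m_link[symmetric] sum_distrib_right)
  finally show ?thesis unfolding Gt_def by simp
qed

lemma Gt_0: "Gt R 0 = 0" by (simp add: Gt_def alive_0 Rs_Nil)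

lemma Gt_bound: "\<bar>Gt R n\<bar> \<le> real n * (\<Sum>s\<in>UNIV. \<bar>R s\<bar>) * aa n"
proof -
  define M where "M = (\<Sum>s\<in>UNIV. \<bar>R s\<bar>)"
  have "\<bar>Gt R n\<bar> \<le> (\<Sum>ys\<in>alive Sbot n. \<bar>tp ys * Rs R ys\<bar>)" unfolding Gt_def by (rule sum_abs)
  also have "\<dots> \<le> (\<Sum>ys\<in>alive Sbot n. (real n * M) * tp ys)"
  proof (intro sum_mono)
    fix ys :: "('s \<times> 'a) list" assume "ys \<in> alive Sbot n"
    hence "length ys = n" by (simp add: alive_def)
    thus "\<bar>tp ys * Rs R ys\<bar> \<le> (real n * M) * tp ys"
      using mult_left_mono[OF Rs_bound[of R ys] tp_nonneg[of ys]] tp_nonneg[of ys] unfolding M_def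
      by (simp add: abs_mult mult_ac)
  qed
  also have "\<dots> = (real n * M) * aa n" unfolding aa_def by (rule sum_distrib_left[symmetric])
  finally show ?thesis unfolding M_def .
qed

end


context elp_pol begin

lemma aa_partial: "aa n = 1 - (\<Sum>k<Suc n. p k)"
proof (induction n)
  case 0 thus ?case by (simp add: aa_0 p_0)
next
  case (Suc n) thus ?case using aa_rec[of n] by simp
qed

lemma ET_facts: "summable (\<lambda>n. real n * p n) \<and> summable p \<and> suminf p = 1
   \<and> enn2real (expected_T P pol s0 Sbot) = (\<Sum>n. real n * p n)"
proof -
  define X where "X = (\<Sum>n. ennreal (real n * p n))"
  define S where "S = (\<Sum>n. ennreal (p n))"
  have fin: "X + \<infinity> * (1 - S) < \<infinity>" using ET_fin[OF pol] by (simp add: expected_T_def X_def S_def)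
  hence "X \<noteq> top" by (metis infinity_ennreal_def less_irrefl top.extremum_uniqueI add_top le_iff_add)
  hence sn: "summable (\<lambda>n. real n * p n)"
    unfolding X_def by (intro summable_suminf_not_top) (auto intro: mult_nonneg_nonneg p_nonneg)
  have sp: "summable p"
  proof (rule summable_comparison_test[OF _ sn])
    show "\<exists>N. \<forall>n\<ge>N. norm (p n) \<le> real n * p n"
      by (intro exI[of _ 1] allI impI) (auto simp: p_nonneg intro: mult_right_mono[of 1 _ "p _", simplified] )
  qed
  have "\<infinity> * (1 - S) \<noteq> top" using fin
    by (metis infinity_ennreal_def less_irrefl add_top le_iff_add top.extremum_uniqueI add.commute)
  hence "1 - S = 0" by (auto simp: ennreal_mult_eq_top_iff)
  hence "1 \<le> S" by (simp add: diff_eq_0_iff_ennreal)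
  moreover have "S = ennreal (suminf p)" unfolding S_def by (rule suminf_ennreal2[OF p_nonneg sp])
  ultimately have ge: "1 \<le> suminf p"
    by (metis ennreal_1 ennreal_le_iff order_trans suminf_nonneg sp p_nonneg zero_le_one  ennreal_le_iff2 linorder_not_le)
  have le: "suminf p \<le> 1"
  proof (rule suminf_le_const[OF sp])
    fix n show "sum p {..<n} \<le> 1"
    proof (cases n)
      case 0 thus ?thesis by simp
    next
      case (Suc j) thus ?thesis using aa_partial[of j] aa_nonneg[of j] by simp
    qed
  qed
  have "X = ennreal (\<Sum>n. real n * p n)" unfolding X_def
    by (rule suminf_ennreal2[OF _ sn]) (auto intro: mult_nonneg_nonneg p_nonneg)
  hence "enn2real (expected_T P pol s0 Sbot) = (\<Sum>n. real n * p n)"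
    unfolding expected_T_def X_def[symmetric] S_def[symmetric] \<open>1 - S = 0\<close>
    by (simp add: suminf_nonneg[OF sn] mult_nonneg_nonneg p_nonneg)
  with sn sp ge le show ?thesis by simp
qed

end


context elp_pol begin

definition ET :: real where "ET = (\<Sum>n. real n * p n)"

lemma sn: "summable (\<lambda>n. real n * p n)" using ET_facts by simp
lemma sp: "summable p" using ET_facts by simp
lemma sum_p: "suminf p = 1" using ET_facts by simp
lemma ET_eq: "enn2real (expected_T P pol s0 Sbot) = ET" using ET_facts by (simp add: ET_def)

lemma aa_tail: "aa n = (\<Sum>k. p (k + Suc n))"
  using aa_partial[of n] suminf_minus_initial_segment[OF sp, of "Suc n"] sum_p by simp

lemma aa_lim: "aa \<longlonglongrightarrow> 0"
proof -
  have "(\<lambda>n. \<Sum>k<Suc n. p k) \<longlonglongrightarrow> suminf p"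
    using summable_LIMSEQ[OF sp] by (rule LIMSEQ_Suc)
  hence "(\<lambda>n. 1 - (\<Sum>k<Suc n. p k)) \<longlonglongrightarrow> 1 - suminf p" by (intro tendsto_intros)
  thus ?thesis using sum_p by (simp add: aa_partial[abs_def])
qed

lemma naa_lim: "(\<lambda>n. real n * aa n) \<longlonglongrightarrow> 0"
proof (rule tendsto_sandwich[of "\<lambda>_. 0" _ _ "\<lambda>n. ET - (\<Sum>j<Suc n. real j * p j)"])
  show "\<forall>\<^sub>F n in sequentially. 0 \<le> real n * aa n"
    by (intro always_eventually allI) (auto intro: mult_nonneg_nonneg aa_nonneg)
  show "\<forall>\<^sub>F n in sequentially. real n * aa n \<le> ET - (\<Sum>j<Suc n. real j * p j)"
  proof (intro always_eventually allI)
    fix n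
    have s1: "summable (\<lambda>k. p (k + Suc n))" using sp by (rule summable_ignore_initial_segment)
    have s2: "summable (\<lambda>k. real (k + Suc n) * p (k + Suc n))"
      using summable_ignore_initial_segment[OF sn, of "Suc n"] by simp
    have "real n * aa n = (\<Sum>k. real n * p (k + Suc n))"
      unfolding aa_tail by (rule suminf_mult[OF s1, symmetric])
    also have "\<dots> \<le> (\<Sum>k. real (k + Suc n) * p (k + Suc n))"
      by (rule suminf_le[OF _ summable_mult[OF s1] s2]) (auto intro: mult_right_mono p_nonneg)
    also have "\<dots> = ET - (\<Sum>j<Suc n. real j * p j)"
      unfolding ET_def using suminf_minus_initial_segment[OF sn, of "Suc n"] by simp
    finally show "real n * aa n \<le> ET - (\<Sum>j<Suc n. real j * p j)" .
  qed
  have "(\<lambda>n. \<Sum>j<Suc n. real j * p j) \<longlonglongrightarrow> ET"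
    unfolding ET_def using summable_LIMSEQ[OF sn] by (rule LIMSEQ_Suc)
  hence "(\<lambda>n. ET - (\<Sum>j<Suc n. real j * p j)) \<longlonglongrightarrow> ET - ET" by (intro tendsto_intros)
  thus "(\<lambda>n. ET - (\<Sum>j<Suc n. real j * p j)) \<longlonglongrightarrow> 0" by simp
qed simp

lemma aa_partial_sum: "(\<Sum>n<N. aa n) = (\<Sum>k<Suc N. real k * p k) + real N * aa N"
proof (induction N)
  case 0 thus ?case by (simp add: p_0)
next
  case (Suc N)
  thus ?case using aa_rec[of N] by (simp add: algebra_simps)
qed

lemma aa_sums: "aa sums ET"
proof -
  have "(\<lambda>N. (\<Sum>k<Suc N. real k * p k) + real N * aa N) \<longlonglongrightarrow> ET + 0"
    using LIMSEQ_Suc[OF summable_LIMSEQ[OF sn]] naa_lim unfolding ET_def by (intro tendsto_intros)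
  thus ?thesis unfolding sums_def aa_partial_sum by simp
qed

definition mu :: "'s \<Rightarrow> real" where "mu s = (\<Sum>n. m n s)"

lemma m_le_aa: "m n s \<le> aa n" unfolding aa_eq by (rule member_le_sum) (auto intro: m_nonneg)

lemma m_summable: "summable (\<lambda>n. m n s)"
  by (rule summable_comparison_test[OF _ sums_summable[OF aa_sums]])
     (use m_le_aa m_nonneg in \<open>auto intro!: exI[of _ 0]\<close>)

lemma m_sums: "(\<lambda>n. m n s) sums mu s" unfolding mu_def using m_summable by (rule summable_sums)

lemma m_weighted_sums: "(\<lambda>n. \<Sum>s\<in>A. m n s * g s) sums (\<Sum>s\<in>A. mu s * g s)"
  by (intro sums_sum sums_mult2 m_sums)

lemma mu_nonneg: "0 \<le> mu s" unfolding mu_def by (intro suminf_nonneg m_summable m_nonneg)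

lemma mu_total: "(\<Sum>s\<in>UNIV. mu s) = ET"
proof -
  have "(\<lambda>n. \<Sum>s\<in>UNIV. m n s * 1) sums (\<Sum>s\<in>UNIV. mu s * 1)" by (rule m_weighted_sums)
  moreover have "aa = (\<lambda>n. \<Sum>s\<in>UNIV. m n s)" by (rule ext) (simp add: aa_eq)
  ultimately have "aa sums (\<Sum>s\<in>UNIV. mu s)" by simp
  thus ?thesis using aa_sums sums_unique2 by blast
qed

lemma mu_bot: "(\<Sum>s\<in>Sbot. mu s) = 1"
proof -
  have "(\<lambda>n. \<Sum>s\<in>Sbot. m n s * 1) sums (\<Sum>s\<in>Sbot. mu s * 1)" by (rule m_weighted_sums)
  hence "(\<lambda>n. p (Suc n)) sums (\<Sum>s\<in>Sbot. mu s)" by (simp add: p_Suc)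
  hence "p sums (\<Sum>s\<in>Sbot. mu s)" using sums_Suc_iff[of p] by (simp add: p_0)
  thus ?thesis using sum_p sums_unique by fastforce
qed

lemma mu_rec: "mu s' = \<rho> s' + (\<Sum>s\<in>-Sbot. mu s * Kp P pol s s')"
proof -
  have "(\<lambda>n. m (Suc n) s') sums (\<Sum>s\<in>-Sbot. mu s * Kp P pol s s')"
    using m_weighted_sums[where A="-Sbot" and g="\<lambda>s. Kp P pol s s'"] by simp
  hence "(\<lambda>n. m n s') sums ((\<Sum>s\<in>-Sbot. mu s * Kp P pol s s') + \<rho> s')"
    using sums_Suc_iff[of "\<lambda>n. m n s'"] by simp
  thus ?thesis using m_sums sums_unique2 by (metis add.commute)
qed

lemma J_eq: "J P R pol s0 Sbot = (\<Sum>s\<in>UNIV. mu s * R s)"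
proof -
  define r where "r n = (\<Sum>s\<in>UNIV. m n s * R s)" for n
  have rs: "r sums (\<Sum>s\<in>UNIV. mu s * R s)" unfolding r_def by (rule m_weighted_sums)
  have part: "(\<Sum>n<N. Jt R (Suc n)) = Gt R 0 - Gt R N + (\<Sum>n<N. r n)" for N
    unfolding J_term r_def[symmetric] by (simp add: sum.distrib sum_lessThan_telescope')
  have GB: "\<bar>Gt R n\<bar> \<le> (\<Sum>s\<in>UNIV. \<bar>R s\<bar>) * (real n * aa n)" for n
    using Gt_bound[of R n] by (simp add: mult_ac)
  have G0: "(\<lambda>N. Gt R N) \<longlonglongrightarrow> 0"
  proof (rule tendsto_sandwich[of "\<lambda>n. - ((\<Sum>s\<in>UNIV. \<bar>R s\<bar>) * (real n * aa n))" _ _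
        "\<lambda>n. (\<Sum>s\<in>UNIV. \<bar>R s\<bar>) * (real n * aa n)"])
    show "\<forall>\<^sub>F n in sequentially. - ((\<Sum>s\<in>UNIV. \<bar>R s\<bar>) * (real n * aa n)) \<le> Gt R n"
      using GB by (intro always_eventually allI) (metis abs_le_iff minus_le_iff)
    show "\<forall>\<^sub>F n in sequentially. Gt R n \<le> (\<Sum>s\<in>UNIV. \<bar>R s\<bar>) * (real n * aa n)"
      using GB by (intro always_eventually allI) (metis abs_le_iff)
    have "(\<lambda>n. (\<Sum>s\<in>UNIV. \<bar>R s\<bar>) * (real n * aa n)) \<longlonglongrightarrow> (\<Sum>s\<in>UNIV. \<bar>R s\<bar>) * 0"
      by (intro tendsto_intros naa_lim)
    thus "(\<lambda>n. (\<Sum>s\<in>UNIV. \<bar>R s\<bar>) * (real n * aa n)) \<longlonglongrightarrow> 0" by simp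
    hence "(\<lambda>n. - ((\<Sum>s\<in>UNIV. \<bar>R s\<bar>) * (real n * aa n))) \<longlonglongrightarrow> - 0" by (intro tendsto_intros)
    thus "(\<lambda>n. - ((\<Sum>s\<in>UNIV. \<bar>R s\<bar>) * (real n * aa n))) \<longlonglongrightarrow> 0" by simp
  qed
  have "(\<lambda>N. Gt R 0 - Gt R N + (\<Sum>n<N. r n)) \<longlonglongrightarrow> 0 - 0 + (\<Sum>s\<in>UNIV. mu s * R s)"
    using G0 rs unfolding sums_def Gt_0 by (intro tendsto_intros)
  hence "(\<lambda>n. Jt R (Suc n)) sums (\<Sum>s\<in>UNIV. mu s * R s)" unfolding sums_def part by simp
  hence "Jt R sums (\<Sum>s\<in>UNIV. mu s * R s)" using sums_Suc_iff[of "Jt R"] by (simp add: Jt_def term_0)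
  moreover have "J P R pol s0 Sbot = suminf (Jt R)"
    unfolding J_def expect_T_def Jt_def Rs_def ..
  ultimately show ?thesis using sums_unique by metis
qed

lemma EQ_eq: "expect_T P pol s0 Sbot (\<lambda>xs. Q (fst (last xs)) (snd (last xs)))
   = (\<Sum>s\<in>Sbot. mu s * (\<Sum>a\<in>UNIV. pol s a * Q s a))"
proof -
  define q where "q n = (\<Sum>xs\<in>term_paths Sbot n. tp xs * Q (fst (last xs)) (snd (last xs)))" for n
  have "(\<lambda>n. q (Suc n)) sums (\<Sum>s\<in>Sbot. mu s * (\<Sum>a\<in>UNIV. pol s a * Q s a))"
    unfolding q_def Q_term by (rule m_weighted_sums)
  hence "q sums (\<Sum>s\<in>Sbot. mu s * (\<Sum>a\<in>UNIV. pol s a * Q s a))"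
    using sums_Suc_iff[of q] by (simp add: q_def term_0)
  thus ?thesis unfolding expect_T_def q_def[symmetric] using sums_unique by metis
qed

end


context elp begin

lemma reach_lemma:
  assumes pol'_nn: "\<And>s a. 0 \<le> pol' s a"
    and sig_nn: "\<And>s a. 0 \<le> sig s a"
    and sig_eq: "\<And>s. s \<notin> C \<Longrightarrow> sig s = pol' s"
  shows "traj_weight P pol' s a xs \<noteq> 0 \<Longrightarrow> pol' s a \<noteq> 0
    \<Longrightarrow> (s \<in> Sbot \<or> (s \<notin> C \<and> (\<exists>n. mm P sig \<rho> Sbot n s > 0)))
    \<Longrightarrow> xs \<noteq> [] \<Longrightarrow> fst (last xs) \<in> C
    \<Longrightarrow> \<exists>n c'. c' \<in> C \<and> mm P sig \<rho> Sbot n c' > 0"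
proof (induction xs arbitrary: s a)
  case Nil thus ?case by simp
next
  case (Cons x ys)
  obtain s' a' where x: "x = (s', a')" by fastforce
  from Cons.prems(1) have h1: "P s a s' \<noteq> 0" and h2: "pol' s' a' \<noteq> 0"
    and h3: "traj_weight P pol' s' a' ys \<noteq> 0" by (auto simp: x)
  have Kpn: "0 \<le> Kp P sig t t'" for t t'
    unfolding Kp_def by (intro sum_nonneg mult_nonneg_nonneg P_nonneg sig_nn)
  have mmn: "0 \<le> mm P sig \<rho> Sbot k t" for k t
    by (induction k arbitrary: t) (auto intro!: sum_nonneg mult_nonneg_nonneg rho_nonneg Kpn)
  have pos: "\<exists>k. mm P sig \<rho> Sbot k s' > 0"
  proof (cases "s \<in> Sbot")
    case True
    hence "mm P sig \<rho> Sbot 0 s' = P s a s'" by (simp add: P_bot)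
    thus ?thesis using h1 P_nonneg[of s a s'] by (intro exI[of _ 0]) simp
  next
    case False
    with Cons.prems(3) obtain n where sC: "s \<notin> C" and mpos: "mm P sig \<rho> Sbot n s > 0" by auto
    have "mm P sig \<rho> Sbot n s * (P s a s' * sig s a) \<le> mm P sig \<rho> Sbot n s * Kp P sig s s'"
      unfolding Kp_def
      by (intro mult_left_mono member_le_sum[where f="\<lambda>a. P s a s' * sig s a"] mult_nonneg_nonneg
          P_nonneg sig_nn mmn) auto
    also have "\<dots> \<le> (\<Sum>t\<in>-Sbot. mm P sig \<rho> Sbot n t * Kp P sig t s')"
      by (rule member_le_sum[where f="\<lambda>t. mm P sig \<rho> Sbot n t * Kp P sig t s'"])
        (use False in \<open>auto intro: mult_nonneg_nonneg mmn Kpn\<close>)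
    finally have "mm P sig \<rho> Sbot n s * (P s a s' * sig s a) \<le> mm P sig \<rho> Sbot (Suc n) s'" by simp
    moreover have "0 < mm P sig \<rho> Sbot n s * (P s a s' * sig s a)"
      using mpos h1 P_nonneg[of s a s'] Cons.prems(2) pol'_nn[of s a] sig_eq[OF sC]
      by (intro mult_pos_pos) auto
    ultimately show ?thesis by (intro exI[of _ "Suc n"]) linarith
  qed
  show ?case
  proof (cases "s' \<in> C")
    case True thus ?thesis using pos by blast
  next
    case False
    hence ys: "ys \<noteq> []" using Cons.prems(5) x by auto
    show ?thesis
      by (rule Cons.IH[OF h3 h2]) (use False pos ys Cons.prems(5) in auto)
  qed
qed

lemma closed_contra:
  assumes pol: "is_policy pol" and CS: "C \<subseteq> -Sbot" and Cne: "C \<noteq> {}"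
    and closed: "\<And>s a s'. s \<in> C \<Longrightarrow> pol s a > 0 \<Longrightarrow> P s a s' > 0 \<Longrightarrow> s' \<in> C"
  shows False
proof -
  obtain c where cC: "c \<in> C" using Cne by auto
  from elp obtain pol' where pol': "is_policy pol'"
    and r: "c = s0 \<or> (\<exists>xs. xs \<noteq> [] \<and> fst (last xs) = c \<and> traj_prob P pol' s0 xs > 0)"
    unfolding finite_ELP_def by blast
  have "c \<noteq> s0" using cC CS s0_bot by auto
  with r obtain xs where xs: "xs \<noteq> []" "fst (last xs) = c" "traj_prob P pol' s0 xs > 0" by auto
  define sig where "sig s = (if s \<in> C then pol s else pol' s)" for s
  have sigp: "is_policy sig" using pol pol' by (auto simp: is_policy_def sig_def)
  interpret S: elp_pol P \<rho> Sbot s0 sig by unfold_locales (rule sigp)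
  have pol'_nn: "0 \<le> pol' s a" for s a using pol' by (auto simp: is_policy_def is_dist_def)
  from xs(3) obtain a0 where a0: "pol' s0 a0 * traj_weight P pol' s0 a0 xs \<noteq> 0"
    unfolding traj_prob_def by (metis (mono_tags, lifting) less_irrefl sum.neutral)
  have "\<exists>n c'. c' \<in> C \<and> S.m n c' > 0"
    by (rule reach_lemma[where pol'=pol' and s=s0 and a=a0 and xs=xs])
       (use a0 xs cC s0_bot pol'_nn S.pol_nonneg in \<open>auto simp: sig_def\<close>)
  then obtain n0 c' where c'C: "c' \<in> C" and c'pos: "S.m n0 c' > 0" by blast
  define SC where "SC n = (\<Sum>s\<in>C. S.m n s)" for n
  have Kz: "Kp P sig t s' = 0" if "t \<in> C" "s' \<notin> C" for t s'
    unfolding Kp_def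
  proof (rule sum.neutral, intro ballI)
    fix a
    have "\<not> (pol t a > 0 \<and> P t a s' > 0)" using closed that by blast
    hence "pol t a = 0 \<or> P t a s' = 0" using S.pol_nonneg[of t a] P_nonneg[of t a s'] that
      by (auto simp: sig_def)
    thus "P t a s' * sig t a = 0" using that by (auto simp: sig_def)
  qed
  have K1: "(\<Sum>s'\<in>C. Kp P sig t s') = 1" if "t \<in> C" for t
  proof -
    have "(\<Sum>s'\<in>C. Kp P sig t s') = (\<Sum>s'\<in>UNIV. Kp P sig t s')"
      by (rule sum.mono_neutral_left) (use Kz that in auto)
    thus ?thesis using S.Kp_sum by simp
  qed
  have mono: "SC n \<le> SC (Suc n)" for n
  proof -
    have "SC n = (\<Sum>t\<in>C. S.m n t * (\<Sum>s'\<in>C. Kp P sig t s'))" unfolding SC_def using K1 by simp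
    also have "\<dots> = (\<Sum>s'\<in>C. \<Sum>t\<in>C. S.m n t * Kp P sig t s')"
      by (subst sum.swap) (simp add: sum_distrib_left)
    also have "\<dots> \<le> (\<Sum>s'\<in>C. \<Sum>t\<in>-Sbot. S.m n t * Kp P sig t s')"
      by (intro sum_mono sum_mono2 CS) (auto intro: mult_nonneg_nonneg S.m_nonneg S.Kp_nonneg)
    also have "\<dots> = SC (Suc n)" by (simp add: SC_def)
    finally show ?thesis .
  qed
  have ge: "SC n0 \<le> SC n" if "n0 \<le> n" for n
    using that by (induction n rule: dec_induct) (auto intro: order_trans[OF _ mono])
  have "SC n \<le> S.aa (Suc n)" for n
    unfolding SC_def S.aa_Suc by (intro sum_mono2 CS) (auto intro: S.m_nonneg)
  hence lb: "\<forall>n\<ge>n0. SC n0 \<le> S.aa (Suc n)" using ge order_trans by blast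
  have "(\<lambda>n. S.aa (Suc n)) \<longlonglongrightarrow> 0" using LIMSEQ_Suc[OF S.aa_lim] .
  hence "SC n0 \<le> 0" using lb by (intro LIMSEQ_le_const) auto
  moreover have "0 < SC n0" unfolding SC_def
    using c'C c'pos by (intro sum_pos2[of C c']) (auto intro: S.m_nonneg)
  ultimately show False by simp
qed

end


context elp_pol begin

lemma stationary_mu:
  assumes st: "is_stationary P pol d"
  shows "d s * ET = mu s"
proof -
  have dnn: "0 \<le> d s" for s using st unfolding is_stationary_def is_dist_def by blast
  have dsum: "sum d UNIV = 1" using st unfolding is_stationary_def is_dist_def by blast
  have dst: "d s' = (\<Sum>s\<in>UNIV. d s * Kp P pol s s')" for s'
    using st unfolding is_stationary_def Kp_def by blast
  define c where "c = (\<Sum>b\<in>Sbot. d b)"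
  have cnn: "0 \<le> c" unfolding c_def by (intro sum_nonneg dnn)
  have S1: "d s' = c * \<rho> s' + (\<Sum>s\<in>-Sbot. d s * Kp P pol s s')" for s'
    unfolding dst[of s'] sum_split_UNIV[of _ Sbot] c_def
    by (simp add: Kp_bot sum_distrib_right)
  define w where "w n s = d s - c * (\<Sum>k<n. m k s)" for n s
  have wrec: "w (Suc n) s' = (\<Sum>s\<in>-Sbot. w n s * Kp P pol s s')" for n s'
  proof -
    have sh: "(\<Sum>k<Suc n. m k s') = \<rho> s' + (\<Sum>k<n. \<Sum>s\<in>-Sbot. m k s * Kp P pol s s')"
      by (subst sum.lessThan_Suc_shift) simp
    have "w (Suc n) s' = d s' - c * (\<rho> s' + (\<Sum>k<n. \<Sum>s\<in>-Sbot. m k s * Kp P pol s s'))"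
      unfolding w_def sh by simp
    also have "\<dots> = (\<Sum>s\<in>-Sbot. d s * Kp P pol s s') - c * (\<Sum>s\<in>-Sbot. (\<Sum>k<n. m k s) * Kp P pol s s')"
    proof -
      have sw: "(\<Sum>k<n. \<Sum>s\<in>-Sbot. m k s * Kp P pol s s') = (\<Sum>s\<in>-Sbot. (\<Sum>k<n. m k s) * Kp P pol s s')"
        by (subst sum.swap) (simp add: sum_distrib_right)
      show ?thesis unfolding sw by (subst S1) (simp add: algebra_simps)
    qed
    also have "\<dots> = (\<Sum>s\<in>-Sbot. w n s * Kp P pol s s')"
      unfolding w_def by (simp add: algebra_simps sum_subtractf sum_distrib_left)
    finally show ?thesis .
  qed
  have wnn: "0 \<le> w n s" for n s
  proof (induction n arbitrary: s)
    case 0 thus ?case by (simp add: w_def dnn)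
  next
    case (Suc n) thus ?case unfolding wrec by (intro sum_nonneg mult_nonneg_nonneg Kp_nonneg) auto
  qed
  have cmu: "c * mu s \<le> d s" for s
  proof -
    have "c * mu s = (\<Sum>k. c * m k s)" unfolding mu_def by (rule suminf_mult[OF m_summable, symmetric])
    also have "\<dots> \<le> d s"
    proof (rule suminf_le_const)
      show "summable (\<lambda>k. c * m k s)" by (intro summable_mult m_summable)
      fix n show "(\<Sum>k<n. c * m k s) \<le> d s" using wnn[of n s] by (simp add: w_def sum_distrib_left)
    qed
    finally show ?thesis .
  qed
  define v where "v s = d s - c * mu s" for s
  have vnn: "0 \<le> v s" for s using cmu[of s] by (simp add: v_def)
  have vrec: "v s' = (\<Sum>s\<in>-Sbot. v s * Kp P pol s s')" for s'
    unfolding v_def S1[of s'] mu_rec[of s']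
    by (simp add: algebra_simps sum_subtractf sum_distrib_left)
  have "(\<Sum>s'\<in>UNIV. v s') = (\<Sum>s\<in>-Sbot. v s)"
  proof -
    have "(\<Sum>s'\<in>UNIV. v s') = (\<Sum>s\<in>-Sbot. v s * (\<Sum>s'\<in>UNIV. Kp P pol s s'))"
      by (subst vrec) (subst sum.swap, simp add: sum_distrib_left)
    thus ?thesis by (simp add: Kp_sum)
  qed
  hence "(\<Sum>s\<in>Sbot. v s) = 0" using sum_split_UNIV[of v Sbot] by simp
  hence vbot: "v b = 0" if "b \<in> Sbot" for b
    using sum_nonneg_eq_0_iff[of Sbot v] vnn that by auto
  have "{s. v s > 0} = {}"
  proof (rule ccontr)
    assume ne: "{s. v s > 0} \<noteq> {}"
    show False
    proof (rule closed_contra[OF pol _ ne])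
      show "{s. v s > 0} \<subseteq> -Sbot" using vbot by force
      fix s a s' assume "s \<in> {s. v s > 0}" "pol s a > 0" "P s a s' > 0"
      hence vs: "v s > 0" and sn: "s \<notin> Sbot" using vbot by force+
      have "v s * (P s a s' * pol s a) \<le> v s * Kp P pol s s'"
        unfolding Kp_def
        by (intro mult_left_mono member_le_sum[where f="\<lambda>a. P s a s' * pol s a"] mult_nonneg_nonneg
            P_nonneg pol_nonneg vnn) auto
      also have "\<dots> \<le> v s'" unfolding vrec[of s']
        by (rule member_le_sum[where f="\<lambda>t. v t * Kp P pol t s'"])
          (use sn in \<open>auto intro: mult_nonneg_nonneg vnn Kp_nonneg\<close>)
      finally have "v s * (P s a s' * pol s a) \<le> v s'" .
      moreover have "0 < v s * (P s a s' * pol s a)" using vs \<open>pol s a > 0\<close> \<open>P s a s' > 0\<close> by simp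
      ultimately show "s' \<in> {s. v s > 0}" by simp
    qed
  qed
  hence nv: "\<not> v s > 0" for s by blast
  have "v s = 0" for s using vnn[of s] nv[of s] by linarith
  hence dmu: "d s = c * mu s" for s unfolding v_def by simp
  have "1 = c * ET" using dsum unfolding dmu by (simp add: sum_distrib_left[symmetric] mu_total)
  thus ?thesis unfolding dmu by (metis mult.commute mult.left_commute mult_1_left)
qed

end

theorem mainTheorem5:
  fixes P :: "'s::finite \<Rightarrow> 'a::finite \<Rightarrow> 's \<Rightarrow> real"
    and R :: "'s \<Rightarrow> real" and \<rho> :: "'s \<Rightarrow> real" and Sbot :: "'s set" and s0 :: 's
    and pol :: "'s \<Rightarrow> 'a \<Rightarrow> real" and d :: "'s \<Rightarrow> real" and Q :: "'s \<Rightarrow> 'a \<Rightarrow> real"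
  assumes "finite_ELP P \<rho> Sbot s0"
    and "is_policy pol"
    and "is_stationary P pol d"
  shows "lagrangian P R pol s0 Sbot Q (lambda_pi P pol d s0 Sbot)
         = J P R pol s0 Sbot
           + (\<Sum>s\<in>- Sbot. \<Sum>a\<in>UNIV. lambda_pi P pol d s0 Sbot s a * (Max (range (Q s)) - Q s a))"
proof -
  interpret elp_pol P \<rho> Sbot s0 pol by unfold_locales (fact assms)+
  define Mx where "Mx s = Max (range (Q s))" for s
  define V where "V s = (\<Sum>a\<in>UNIV. pol s a * Q s a)" for s
  define X where "X s' = R s' + (if s' \<notin> Sbot then Mx s' else 0)" for s'
  have dmu: "d s * ET = mu s" for s by (rule stationary_mu[OF assms(3)])
  have lam: "lambda_pi P pol d s0 Sbot s a = mu s * pol s a" for s a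
    unfolding lambda_pi_def ET_eq using dmu[of s] by (simp add: mult_ac)
  have dst: "d s' = (\<Sum>s\<in>UNIV. d s * Kp P pol s s')" for s'
    using assms(3) unfolding is_stationary_def Kp_def by blast
  have muinv: "mu s' = (\<Sum>s\<in>UNIV. mu s * Kp P pol s s')" for s'
    unfolding dmu[symmetric] using dst[of s'] by (simp add: sum_distrib_left mult_ac)
  have bpol: "(\<Sum>a\<in>UNIV. pol s a * bellman P R Sbot Q s a) = (\<Sum>s'\<in>UNIV. Kp P pol s s' * X s')" for s
  proof -
    have "(\<Sum>a\<in>UNIV. pol s a * bellman P R Sbot Q s a) = (\<Sum>a\<in>UNIV. \<Sum>s'\<in>UNIV. P s a s' * pol s a * X s')"
      unfolding bellman_def X_def Mx_def by (simp add: sum_distrib_left mult_ac)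
    also have "\<dots> = (\<Sum>s'\<in>UNIV. \<Sum>a\<in>UNIV. P s a s' * pol s a * X s')" by (rule sum.swap)
    also have "\<dots> = (\<Sum>s'\<in>UNIV. Kp P pol s s' * X s')" unfolding Kp_def by (simp add: sum_distrib_right)
    finally show ?thesis .
  qed
  have A: "(\<Sum>s\<in>UNIV. \<Sum>a\<in>UNIV. lambda_pi P pol d s0 Sbot s a * (bellman P R Sbot Q s a - Q s a))
      = (\<Sum>s'\<in>UNIV. mu s' * X s') - (\<Sum>s\<in>UNIV. mu s * V s)"
  proof -
    have "(\<Sum>s\<in>UNIV. \<Sum>a\<in>UNIV. lambda_pi P pol d s0 Sbot s a * (bellman P R Sbot Q s a - Q s a))
        = (\<Sum>s\<in>UNIV. mu s * (\<Sum>a\<in>UNIV. pol s a * bellman P R Sbot Q s a)) - (\<Sum>s\<in>UNIV. mu s * V s)"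
      unfolding lam V_def by (simp add: sum_distrib_left right_diff_distrib sum_subtractf mult_ac)
    also have "(\<Sum>s\<in>UNIV. mu s * (\<Sum>a\<in>UNIV. pol s a * bellman P R Sbot Q s a))
        = (\<Sum>s'\<in>UNIV. (\<Sum>s\<in>UNIV. mu s * Kp P pol s s') * X s')"
    proof -
      have "(\<Sum>s\<in>UNIV. mu s * (\<Sum>s'\<in>UNIV. Kp P pol s s' * X s'))
          = (\<Sum>s\<in>UNIV. \<Sum>s'\<in>UNIV. mu s * Kp P pol s s' * X s')"
        by (simp add: sum_distrib_left mult_ac)
      also have "\<dots> = (\<Sum>s'\<in>UNIV. \<Sum>s\<in>UNIV. mu s * Kp P pol s s' * X s')" by (rule sum.swap)
      also have "\<dots> = (\<Sum>s'\<in>UNIV. (\<Sum>s\<in>UNIV. mu s * Kp P pol s s') * X s')"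
        by (simp add: sum_distrib_right)
      finally show ?thesis unfolding bpol .
    qed
    also have "\<dots> = (\<Sum>s'\<in>UNIV. mu s' * X s')" by (simp only: muinv[symmetric])
    finally show ?thesis .
  qed
  have B: "(\<Sum>s\<in>- Sbot. \<Sum>a\<in>UNIV. lambda_pi P pol d s0 Sbot s a * (Max (range (Q s)) - Q s a))
      = (\<Sum>s\<in>-Sbot. mu s * Mx s) - (\<Sum>s\<in>-Sbot. mu s * V s)"
    unfolding lam V_def Mx_def
    by (simp add: sum_distrib_left right_diff_distrib sum_subtractf mult_ac
        sum_distrib_right[symmetric] pol_sum)
  have X: "(\<Sum>s'\<in>UNIV. mu s' * X s') = (\<Sum>s\<in>UNIV. mu s * R s) + (\<Sum>s\<in>-Sbot. mu s * Mx s)"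
  proof -
    have "(\<Sum>s'\<in>UNIV. mu s' * X s') = (\<Sum>s\<in>UNIV. mu s * R s) + (\<Sum>s\<in>UNIV. mu s * (if s \<notin> Sbot then Mx s else 0))"
      unfolding X_def by (simp add: distrib_left sum.distrib)
    also have "(\<Sum>s\<in>UNIV. mu s * (if s \<notin> Sbot then Mx s else 0)) = (\<Sum>s\<in>-Sbot. mu s * Mx s)"
      by (rule sum.mono_neutral_cong_right) auto
    finally show ?thesis .
  qed
  have VS: "(\<Sum>s\<in>UNIV. mu s * V s) = (\<Sum>s\<in>Sbot. mu s * V s) + (\<Sum>s\<in>-Sbot. mu s * V s)"
    by (rule sum_split_UNIV)
  show ?thesis
    unfolding lagrangian_def EQ_eq J_eq A B X VS V_def[symmetric] by simp
qed


end
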